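(* Let $D$ be a finite subset of $\mathbb{N}^d\setminus\{0\}$ that is an antichain with respect to the natural partial order. Consider the collection $\mathcal{C}_D$ of all GNS $S\subseteq\mathbb{N}^d$ with $D\subseteq\mathcal{H}(S)$, ordered by inclusion. Then the maximal members of $\mathcal{C}_D$ are exactly the quasi-irreducible GNS $S$ with $FA(S)=D$.
   Context: $\mathbb{N}=\{0,1,2,\dots\}$. A GNS is a submonoid $S\subseteq\mathbb{N}^d$ with finite complement $\mathcal{H}(S)=\mathbb{N}^d\setminus S$ (gaps). Natural partial order: $x\le y$ iff $x^{(i)}\le y^{(i)}$ for all $i$. A relaxed monomial order is a total order $\prec$ on $\mathbb{N}^d$ with (i) $v\prec w\Rightarrow v\prec w+u$ for all $u\in\mathbb{N}^d$, (ii) $0\prec v$ for all $v\neq0$. A gap is Frobenius allowable if it equals $\max_\prec\mathcal{H}(S)$ for some relaxed monomial order $\prec$; $FA(S)$ is the set of Frobenius allowable gaps. A GNS $S$ is quasi-irreducible if for every $x\in\mathcal{H}(S)$, either $2x\in FA(S)$ or there is $F\in FA(S)$ with $F-x\in S$ (in particular $F-x\in\mathbb{N}^d$). *)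

theory Defs
  imports Main
begin

text \<open>Points of N^d are functions 'd \<Rightarrow> nat for a finite index type 'd (d = CARD('d)).
  The natural partial order is the pointwise order (le_fun in Main).\<close>

definition vadd :: "('d \<Rightarrow> nat) \<Rightarrow> ('d \<Rightarrow> nat) \<Rightarrow> ('d \<Rightarrow> nat)" where
  "vadd x y = (\<lambda>i. x i + y i)"

definition vsub :: "('d \<Rightarrow> nat) \<Rightarrow> ('d \<Rightarrow> nat) \<Rightarrow> ('d \<Rightarrow> nat)" where
  "vsub x y = (\<lambda>i. x i - y i)"

definition vzero :: "'d \<Rightarrow> nat" where
  "vzero = (\<lambda>i. 0)"

definition gaps :: "('d \<Rightarrow> nat) set \<Rightarrow> ('d \<Rightarrow> nat) set" where
  "gaps S = UNIV - S"

definition GNS :: "('d::finite \<Rightarrow> nat) set \<Rightarrow> bool" where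
  "GNS S \<longleftrightarrow> vzero \<in> S \<and> (\<forall>x\<in>S. \<forall>y\<in>S. vadd x y \<in> S) \<and> finite (gaps S)"

text \<open>A relaxed monomial order, given as its strict part R (R v w means v \<prec> w).\<close>
definition relaxed_monomial_order :: "(('d \<Rightarrow> nat) \<Rightarrow> ('d \<Rightarrow> nat) \<Rightarrow> bool) \<Rightarrow> bool" where
  "relaxed_monomial_order R \<longleftrightarrow>
     (\<forall>v. \<not> R v v) \<and>
     (\<forall>u v w. R u v \<longrightarrow> R v w \<longrightarrow> R u w) \<and>
     (\<forall>v w. v \<noteq> w \<longrightarrow> R v w \<or> R w v) \<and>
     (\<forall>u v w. R v w \<longrightarrow> R v (vadd w u)) \<and>
     (\<forall>v. v \<noteq> vzero \<longrightarrow> R vzero v)"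

definition FA :: "('d::finite \<Rightarrow> nat) set \<Rightarrow> ('d \<Rightarrow> nat) set" where
  "FA S = {F \<in> gaps S. \<exists>R. relaxed_monomial_order R \<and> (\<forall>h\<in>gaps S. h \<noteq> F \<longrightarrow> R h F)}"

definition quasi_irreducible :: "('d::finite \<Rightarrow> nat) set \<Rightarrow> bool" where
  "quasi_irreducible S \<longleftrightarrow>
     (\<forall>x\<in>gaps S. vadd x x \<in> FA S \<or> (\<exists>F\<in>FA S. x \<le> F \<and> vsub F x \<in> S))"

definition antichain :: "('d \<Rightarrow> nat) set \<Rightarrow> bool" where
  "antichain D \<longleftrightarrow> (\<forall>a\<in>D. \<forall>b\<in>D. a \<le> b \<longrightarrow> a = b)"

definition CD :: "('d::finite \<Rightarrow> nat) set \<Rightarrow> ('d \<Rightarrow> nat) set set" where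
  "CD D = {S. GNS S \<and> D \<subseteq> gaps S}"

definition maximal_in :: "'a set \<Rightarrow> 'a set set \<Rightarrow> bool" where
  "maximal_in S C \<longleftrightarrow> S \<in> C \<and> (\<forall>T\<in>C. S \<subseteq> T \<longrightarrow> T = S)"

end

theory Submission
  imports Defs
begin

lemma strict_total_exists:
  "\<exists>W::'a \<Rightarrow> 'a \<Rightarrow> bool. (\<forall>v. \<not> W v v) \<and> (\<forall>u v w. W u v \<longrightarrow> W v w \<longrightarrow> W u w)
     \<and> (\<forall>v w. v \<noteq> w \<longrightarrow> W v w \<or> W w v)"
proof -
  from well_ordering obtain r :: "'a rel" where r: "Well_order r" "Field r = UNIV" by (elim exE conjE)
  have lin: "linear_order_on UNIV r" using r by (simp add: well_order_on_def)
  have t: "trans r" and a: "antisym r" and tot: "total_on UNIV r" using lin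
    by (simp_all add: linear_order_on_def partial_order_on_def preorder_on_def)
  define W where "W v w \<longleftrightarrow> (v,w) \<in> r \<and> v \<noteq> w" for v w
  have 1: "\<forall>v. \<not> W v v" by (simp add: W_def)
  have 2: "\<forall>u v w. W u v \<longrightarrow> W v w \<longrightarrow> W u w"
    unfolding W_def using t a by (metis antisymD transD)
  have 3: "\<forall>v w. v \<noteq> w \<longrightarrow> W v w \<or> W w v"
    unfolding W_def using tot by (simp add: total_on_def)
  show ?thesis using 1 2 3 by (intro exI[of _ W]) blast
qed

lemma le_vadd: "w \<le> vadd w u" by (simp add: vadd_def le_fun_def)
lemma vadd_vzero: "vadd w vzero = w" by (simp add: vadd_def vzero_def)

lemma ext_relaxed:
  fixes R :: "('d \<Rightarrow> nat) \<Rightarrow> ('d \<Rightarrow> nat) \<Rightarrow> bool"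
  assumes a1: "\<forall>v. \<not>R v v" and a2: "\<forall>u v w. R u v \<longrightarrow> R v w \<longrightarrow> R u w"
    and a3: "\<forall>v w. v\<noteq>w \<longrightarrow> R v w \<or> R w v"
    and a4: "\<forall>v w. v \<le> w \<longrightarrow> v \<noteq> w \<longrightarrow> R v w"
  shows "relaxed_monomial_order R"
proof -
  have b4: "\<forall>u v w. R v w \<longrightarrow> R v (vadd w u)"
  proof (intro allI impI)
    fix u v w assume "R v w"
    show "R v (vadd w u)"
    proof (cases "vadd w u = w")
      case True then show ?thesis using \<open>R v w\<close> by simp
    next
      case False then show ?thesis using a2 a4 \<open>R v w\<close> le_vadd by metis
    qed
  qed
  have b5: "\<forall>v. v \<noteq> vzero \<longrightarrow> R vzero v"
  proof (intro allI impI)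
    fix v :: "'d \<Rightarrow> nat" assume "v \<noteq> vzero"
    moreover have "vzero \<le> v" by (simp add: vzero_def le_fun_def)
    ultimately show "R vzero v" using a4 by metis
  qed
  show ?thesis unfolding relaxed_monomial_order_def using a1 a2 a3 b4 b5 by blast
qed

lemma deg_mono:
  fixes v w :: "'d::finite \<Rightarrow> nat"
  assumes "v \<le> w" "v \<noteq> w" shows "sum v UNIV < sum w UNIV"
proof -
  obtain a where "v a \<noteq> w a" using assms(2) by auto
  then have "v a < w a" using assms(1) le_funD[OF assms(1), of a] by simp
  then show ?thesis using assms(1) by (intro sum_strict_mono_ex1) (auto simp: le_fun_def)
qed

lemma FA_eq: "FA S = {F \<in> gaps S. \<forall>h\<in>gaps S. F \<le> h \<longrightarrow> h = F}"
proof (intro set_eqI iffI)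
  fix F assume "F \<in> FA S"
  then obtain R where F: "F \<in> gaps S" "relaxed_monomial_order R" "\<forall>h\<in>gaps S. h \<noteq> F \<longrightarrow> R h F"
    unfolding FA_def by blast
  have irr: "\<And>v. \<not> R v v" and tr: "\<And>u v w. R u v \<Longrightarrow> R v w \<Longrightarrow> R u w"
    and tot: "\<And>v w. v \<noteq> w \<Longrightarrow> R v w \<or> R w v" and mon: "\<And>u v w. R v w \<Longrightarrow> R v (vadd w u)"
    using F(2) unfolding relaxed_monomial_order_def by blast+
  have "h = F" if "h \<in> gaps S" "F \<le> h" for h
  proof (rule ccontr)
    assume ne: "h \<noteq> F"
    then have hF: "R h F" using F that by blast
    have eq: "vadd F (vsub h F) = h" using that(2) by (auto simp: vadd_def vsub_def le_fun_def fun_eq_iff)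
    have "R h h" using mon[OF hF, of "vsub h F"] eq by simp
    then show False using irr by blast
  qed
  then show "F \<in> {F \<in> gaps S. \<forall>h\<in>gaps S. F \<le> h \<longrightarrow> h = F}" using F by blast
next
  fix F assume F: "F \<in> {F \<in> gaps S. \<forall>h\<in>gaps S. F \<le> h \<longrightarrow> h = F}"
  obtain W :: "('a \<Rightarrow> nat) \<Rightarrow> ('a \<Rightarrow> nat) \<Rightarrow> bool" where W: "\<forall>v. \<not> W v v"
    "\<forall>u v w. W u v \<longrightarrow> W v w \<longrightarrow> W u w" "\<forall>v w. v \<noteq> w \<longrightarrow> W v w \<or> W w v"
    using strict_total_exists by metis
  define T where "T v w \<longleftrightarrow> sum v UNIV < sum w UNIV \<or> (sum v UNIV = sum w UNIV \<and> W v w)" for v w :: "'a \<Rightarrow> nat"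
  define A where "A = {x. \<not> F \<le> x}"
  define R where "R v w \<longleftrightarrow> (v \<in> A \<and> w \<notin> A) \<or> ((v \<in> A \<longleftrightarrow> w \<in> A) \<and> T v w)" for v w
  have T1: "\<And>v. \<not> T v v" using W(1) by (simp add: T_def)
  have T2: "T u w" if "T u v" "T v w" for u v w
  proof -
    have "W u v \<Longrightarrow> W v w \<Longrightarrow> W u w" using W(2) by blast
    then show ?thesis using that unfolding T_def by linarith
  qed
  have T3: "T v w \<or> T w v" if "v \<noteq> w" for v w
  proof -
    have "W v w \<or> W w v" using W(3) that by blast
    then show ?thesis unfolding T_def by linarith
  qed
  have T4: "T v w" if "v \<le> w" "v \<noteq> w" for v w using deg_mono[OF that] unfolding T_def by blast
  have "relaxed_monomial_order R"
  proof (rule ext_relaxed)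
    show "\<forall>v. \<not> R v v" using T1 by (simp add: R_def)
    show "\<forall>u v w. R u v \<longrightarrow> R v w \<longrightarrow> R u w"
    proof (intro allI impI)
      fix u v w assume "R u v" "R v w" then show "R u w" unfolding R_def using T2 by blast
    qed
    show "\<forall>v w. v \<noteq> w \<longrightarrow> R v w \<or> R w v"
    proof (intro allI impI)
      fix v w :: "'a \<Rightarrow> nat" assume "v \<noteq> w" then show "R v w \<or> R w v" unfolding R_def using T3 by blast
    qed
    show "\<forall>v w. v \<le> w \<longrightarrow> v \<noteq> w \<longrightarrow> R v w"
    proof (intro allI impI)
      fix v w :: "'a \<Rightarrow> nat" assume vw: "v \<le> w" "v \<noteq> w"
      have "v \<notin> A \<Longrightarrow> w \<notin> A" unfolding A_def using vw(1) order_trans by blast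
      then show "R v w" unfolding R_def using T4[OF vw] by blast
    qed
  qed
  moreover have "\<forall>h\<in>gaps S. h \<noteq> F \<longrightarrow> R h F" using F unfolding R_def A_def by auto
  ultimately show "F \<in> FA S" using F unfolding FA_def by blast
qed


lemma vadd_comm: "vadd x y = vadd y x" by (auto simp: vadd_def fun_eq_iff)

lemma gap_nz: "GNS S \<Longrightarrow> h \<in> gaps S \<Longrightarrow> h \<noteq> vzero"
  by (auto simp: GNS_def gaps_def)

lemma insert_GNS:
  assumes S: "GNS S" and pf: "\<forall>s\<in>S. s \<noteq> vzero \<longrightarrow> vadd h s \<in> S" and hh: "vadd h h \<in> S"
  shows "GNS (insert h S)"
proof -
  have z: "vzero \<in> S" and c: "\<forall>x\<in>S. \<forall>y\<in>S. vadd x y \<in> S" and f: "finite (gaps S)"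
    using S by (auto simp: GNS_def)
  have hs: "vadd h s \<in> insert h S" if "s \<in> S" for s
    using pf that vadd_vzero by (cases "s = vzero") auto
  have "\<forall>x\<in>insert h S. \<forall>y\<in>insert h S. vadd x y \<in> insert h S"
  proof (intro ballI)
    fix x y assume x: "x \<in> insert h S" and y: "y \<in> insert h S"
    show "vadd x y \<in> insert h S"
    proof (cases "x = h")
      case True
      then show ?thesis using y hh hs by auto
    next
      case False
      then have xS: "x \<in> S" using x by simp
      show ?thesis
      proof (cases "y = h")
        case True then show ?thesis using hs[OF xS] vadd_comm by metis
      next
        case False then show ?thesis using y xS c by auto
      qed
    qed
  qed
  moreover have "finite (gaps (insert h S))"
    using f by (rule finite_subset[rotated]) (auto simp: gaps_def)
  ultimately show ?thesis using z by (auto simp: GNS_def)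
qed

lemma maxgap_exists:
  assumes "GNS S" "x \<in> gaps S" shows "\<exists>F\<in>gaps S. x \<le> F \<and> (\<forall>h\<in>gaps S. F \<le> h \<longrightarrow> h = F)"
  using finite_has_maximal2[of "gaps S" x] assms by (auto simp: GNS_def)

lemma le_vsub_vadd: "x \<le> F \<Longrightarrow> vadd x (vsub F x) = F"
  by (auto simp: vadd_def vsub_def le_fun_def fun_eq_iff)

theorem theorem3p2:
  fixes D :: "('d::finite \<Rightarrow> nat) set"
  assumes "finite D" and "vzero \<notin> D" and "antichain D"
  shows "\<forall>S. maximal_in S (CD D) \<longleftrightarrow> (GNS S \<and> quasi_irreducible S \<and> FA S = D)"
proof (intro allI iffI)
  fix S :: "('d \<Rightarrow> nat) set"
  assume "GNS S \<and> quasi_irreducible S \<and> FA S = D"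
  then have S: "GNS S" and q: "quasi_irreducible S" and fa: "FA S = D" by auto
  have DG: "D \<subseteq> gaps S" using fa FA_eq by auto
  show "maximal_in S (CD D)" unfolding maximal_in_def
  proof (intro conjI ballI impI)
    show "S \<in> CD D" using S DG by (simp add: CD_def)
  next
    fix T assume T: "T \<in> CD D" "S \<subseteq> T"
    then have GT: "GNS T" and DT: "D \<subseteq> gaps T" by (auto simp: CD_def)
    have cT: "\<And>x y. x \<in> T \<Longrightarrow> y \<in> T \<Longrightarrow> vadd x y \<in> T" using GT by (auto simp: GNS_def)
    show "T = S"
    proof (rule ccontr)
      assume "T \<noteq> S"
      then obtain x where x: "x \<in> T" "x \<notin> S" using T(2) by blast
      then have "x \<in> gaps S" by (simp add: gaps_def)
      then have "vadd x x \<in> FA S \<or> (\<exists>F\<in>FA S. x \<le> F \<and> vsub F x \<in> S)"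
        using q by (simp add: quasi_irreducible_def)
      then show False
      proof
        assume "vadd x x \<in> FA S"
        then show False using cT[OF x(1) x(1)] DT fa by (auto simp: gaps_def)
      next
        assume "\<exists>F\<in>FA S. x \<le> F \<and> vsub F x \<in> S"
        then obtain F where "F \<in> D" "x \<le> F" "vsub F x \<in> T" using fa T(2) by blast
        then have "F \<in> T" using cT[OF x(1)] le_vsub_vadd by metis
        then show False using \<open>F \<in> D\<close> DT by (auto simp: gaps_def)
      qed
    qed
  qed
next
  fix S :: "('d \<Rightarrow> nat) set"
  assume M: "maximal_in S (CD D)"
  then have S: "GNS S" and DG: "D \<subseteq> gaps S" and mx: "\<And>T. GNS T \<Longrightarrow> D \<subseteq> gaps T \<Longrightarrow> S \<subseteq> T \<Longrightarrow> T = S"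
    by (auto simp: maximal_in_def CD_def)
  have z: "vzero \<in> S" and cS: "\<And>x y. x \<in> S \<Longrightarrow> y \<in> S \<Longrightarrow> vadd x y \<in> S" and fg: "finite (gaps S)"
    using S by (auto simp: GNS_def)
  have ac: "\<And>a b. a \<in> D \<Longrightarrow> b \<in> D \<Longrightarrow> a \<le> b \<Longrightarrow> a = b" using assms(3) by (auto simp: antichain_def)
  have SG: "h \<in> D" if h: "h \<in> gaps S" "\<forall>s\<in>S. s \<noteq> vzero \<longrightarrow> vadd h s \<in> S" "vadd h h \<in> S" for h
  proof (rule ccontr)
    assume "h \<notin> D"
    have "GNS (insert h S)" using insert_GNS[OF S h(2,3)] .
    moreover have "D \<subseteq> gaps (insert h S)" using DG \<open>h \<notin> D\<close> by (auto simp: gaps_def)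
    ultimately have "insert h S = S" using mx by blast
    then show False using h(1) by (auto simp: gaps_def)
  qed
  have sub: "FA S \<subseteq> D"
    proof
      fix F assume "F \<in> FA S"
      then have F: "F \<in> gaps S" "\<forall>h\<in>gaps S. F \<le> h \<longrightarrow> h = F" using FA_eq by auto
      have nz: "F \<noteq> vzero" using gap_nz[OF S F(1)] .
      have up: "vadd F u \<in> S" if "u \<noteq> vzero" for u
      proof (rule ccontr)
        assume "vadd F u \<notin> S"
        then have "vadd F u = F" using F le_vadd by (auto simp: gaps_def)
        then show False using that by (auto simp: vadd_def vzero_def fun_eq_iff)
      qed
      show "F \<in> D" using SG[OF F(1)] up nz by blast
    qed
  have fa: "FA S = D"
  proof (rule equalityI[OF sub])
    show "D \<subseteq> FA S"
    proof
      fix d assume d: "d \<in> D"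
      then have dg: "d \<in> gaps S" using DG by blast
      obtain F where F: "F \<in> gaps S" "d \<le> F" "\<forall>h\<in>gaps S. F \<le> h \<longrightarrow> h = F"
        using maxgap_exists[OF S dg] by blast
      then have "F \<in> FA S" using FA_eq by auto
      then have "F \<in> D" using sub by blast
      then have "d = F" using ac d F(2) by blast
      then show "d \<in> FA S" using \<open>F \<in> FA S\<close> by simp
    qed
  qed
  have q: "quasi_irreducible S"
  proof (rule ccontr)
    define ok where "ok x \<longleftrightarrow> vadd x x \<in> D \<or> (\<exists>F\<in>D. x \<le> F \<and> vsub F x \<in> S)" for x
    assume "\<not> quasi_irreducible S"
    then obtain x where "x \<in> gaps S" "\<not> ok x" unfolding quasi_irreducible_def ok_def fa by blast
    then have "{x \<in> gaps S. \<not> ok x} \<noteq> {}" by blast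
    then obtain h where h: "h \<in> gaps S" "\<not> ok h" and hmax: "\<And>y. y \<in> gaps S \<Longrightarrow> \<not> ok y \<Longrightarrow> h \<le> y \<Longrightarrow> y = h"
      using finite_has_maximal[of "{x \<in> gaps S. \<not> ok x}"] fg by auto
    have hS: "h \<notin> S" using h(1) by (simp add: gaps_def)
    have hnz: "h \<noteq> vzero" using gap_nz[OF S h(1)] .
    have okup: "ok y" if "y \<notin> S" "h \<le> y" "y \<noteq> h" for y
      using hmax[of y] that by (auto simp: gaps_def)
    have nok1: "\<not> (vadd h h \<in> D)" and nok2: "\<And>F. F \<in> D \<Longrightarrow> h \<le> F \<Longrightarrow> vsub F h \<notin> S"
      using h(2) unfolding ok_def by auto
    have pf: "vadd h s \<in> S" if s: "s \<in> S" "s \<noteq> vzero" for s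
    proof (rule ccontr)
      assume g: "vadd h s \<notin> S"
      have ne1: "vadd h s \<noteq> h" using s(2) by (auto simp: vadd_def vzero_def fun_eq_iff)
      have "ok (vadd h s)" using okup[OF g le_vadd ne1] .
      then show False unfolding ok_def
      proof
        assume "\<exists>F\<in>D. vadd h s \<le> F \<and> vsub F (vadd h s) \<in> S"
        then obtain F where F: "F \<in> D" "vadd h s \<le> F" "vsub F (vadd h s) \<in> S" by blast
        have "h \<le> F" using F(2) le_vadd order_trans by blast
        moreover have "vsub F h = vadd (vsub F (vadd h s)) s" using F(2)
          by (auto simp: vadd_def vsub_def le_fun_def fun_eq_iff)
        ultimately show False using nok2[OF F(1)] cS[OF F(3) s(1)] by simp
      next
        assume D1: "vadd (vadd h s) (vadd h s) \<in> D"
        define g2 where "g2 = vadd h (vadd s s)"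
        have e1: "vsub (vadd (vadd h s) (vadd h s)) h = g2"
          by (auto simp: g2_def vadd_def vsub_def fun_eq_iff)
        have l1: "h \<le> vadd (vadd h s) (vadd h s)" by (auto simp: vadd_def le_fun_def)
        have g2S: "g2 \<notin> S" using nok2[OF D1 l1] e1 by simp
        have ne2: "g2 \<noteq> h" using s(2) by (auto simp: g2_def vadd_def vzero_def fun_eq_iff)
        have "ok g2" using okup[OF g2S _ ne2] by (simp add: g2_def le_vadd)
        then show False unfolding ok_def
        proof
          assume "\<exists>F\<in>D. g2 \<le> F \<and> vsub F g2 \<in> S"
          then obtain F where F: "F \<in> D" "g2 \<le> F" "vsub F g2 \<in> S" by blast
          have "h \<le> F" using F(2) le_vadd order_trans unfolding g2_def by blast
          moreover have "vsub F h = vadd (vsub F g2) (vadd s s)" using F(2)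
            by (auto simp: g2_def vadd_def vsub_def le_fun_def fun_eq_iff)
          ultimately show False using nok2[OF F(1)] cS[OF F(3) cS[OF s(1) s(1)]] by simp
        next
          assume D2: "vadd g2 g2 \<in> D"
          have "vadd (vadd h s) (vadd h s) \<le> vadd g2 g2" by (auto simp: g2_def vadd_def le_fun_def)
          then have "vadd (vadd h s) (vadd h s) = vadd g2 g2" using ac D1 D2 by blast
          then show False using s(2) by (auto simp: g2_def vadd_def vzero_def fun_eq_iff)
        qed
      qed
    qed
    have hh: "vadd h h \<in> S"
    proof (rule ccontr)
      assume g: "vadd h h \<notin> S"
      have ne1: "vadd h h \<noteq> h" using hnz by (auto simp: vadd_def vzero_def fun_eq_iff)
      have "ok (vadd h h)" using okup[OF g le_vadd ne1] .
      then show False unfolding ok_def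
      proof
        assume "\<exists>F\<in>D. vadd h h \<le> F \<and> vsub F (vadd h h) \<in> S"
        then obtain F where F: "F \<in> D" "vadd h h \<le> F" "vsub F (vadd h h) \<in> S" by blast
        have hF: "h \<le> F" using F(2) le_vadd order_trans by blast
        show False
        proof (cases "vsub F (vadd h h) = vzero")
          case True
          then have "F = vadd h h" using F(2) unfolding vadd_def vsub_def vzero_def le_fun_def fun_eq_iff
            by (metis diff_is_0_eq le_antisym)
          then show False using nok1 F(1) by simp
        next
          case False
          have "vsub F h = vadd h (vsub F (vadd h h))" using F(2)
            by (auto simp: vadd_def vsub_def le_fun_def fun_eq_iff)
          then show False using nok2[OF F(1) hF] pf[OF F(3) False] by simp
        qed
      next
        assume D4: "vadd (vadd h h) (vadd h h) \<in> D"
        define t where "t = vadd h (vadd h h)"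
        have e1: "vsub (vadd (vadd h h) (vadd h h)) h = t"
          by (auto simp: t_def vadd_def vsub_def fun_eq_iff)
        have l1: "h \<le> vadd (vadd h h) (vadd h h)" by (auto simp: vadd_def le_fun_def)
        have tS: "t \<notin> S" using nok2[OF D4 l1] e1 by simp
        have ne2: "t \<noteq> h" using hnz by (auto simp: t_def vadd_def vzero_def fun_eq_iff)
        have "ok t" using okup[OF tS _ ne2] by (simp add: t_def le_vadd)
        then show False unfolding ok_def
        proof
          assume D6: "vadd t t \<in> D"
          have "vadd (vadd h h) (vadd h h) \<le> vadd t t" by (auto simp: t_def vadd_def le_fun_def)
          then have "vadd (vadd h h) (vadd h h) = vadd t t" using ac D4 D6 by blast
          then show False using hnz by (auto simp: t_def vadd_def vzero_def fun_eq_iff)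
        next
          assume "\<exists>F\<in>D. t \<le> F \<and> vsub F t \<in> S"
          then obtain F where F: "F \<in> D" "t \<le> F" "vsub F t \<in> S" by blast
          have hF: "h \<le> F" using F(2) le_vadd order_trans unfolding t_def by blast
          show False
          proof (cases "vsub F t = vzero")
            case True
            then have "F = t" using F(2) unfolding vsub_def vzero_def le_fun_def fun_eq_iff
              by (metis diff_is_0_eq le_antisym)
            moreover have "t \<le> vadd (vadd h h) (vadd h h)" by (auto simp: t_def vadd_def le_fun_def)
            ultimately have "t = vadd (vadd h h) (vadd h h)" using ac F(1) D4 by blast
            then show False using hnz by (auto simp: t_def vadd_def vzero_def fun_eq_iff)
          next
            case False
            have p1: "vadd h (vsub F t) \<in> S" using pf[OF F(3) False] .
            have nz1: "vadd h (vsub F t) \<noteq> vzero" using hnz by (auto simp: vadd_def vzero_def fun_eq_iff)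
            have "vsub F h = vadd h (vadd h (vsub F t))"
            proof (rule ext)
              fix i
              have "h i + (h i + h i) \<le> F i" using F(2) by (simp add: t_def vadd_def le_fun_def)
              then show "vsub F h i = vadd h (vadd h (vsub F t)) i" by (simp add: vadd_def vsub_def t_def)
            qed
            then show False using nok2[OF F(1) hF] pf[OF p1 nz1] by simp
          qed
        qed
      qed
    qed
    have "vadd h s \<in> S" if "s \<in> S" "s \<noteq> vzero" for s using pf that .
    then have "h \<in> D" using SG[OF h(1)] hh by blast
    moreover have "vsub h h = vzero" by (auto simp: vsub_def vzero_def)
    ultimately show False using nok2[of h] z by auto
  qed
  show "GNS S \<and> quasi_irreducible S \<and> FA S = D" using S q fa by blast
qed

end
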